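(* Let $n$ be a natural number and let $(A,+,\circ)$ be a left brace of cardinality $p^{n}$, where $p$ is a prime with $p>n+1$. Then $pA=\{pa: a\in A\}$ is a brace (a sub-brace of $A$), and every product of any $p-1$ elements of $pA$ under the operation $*$ (with any distribution of brackets) is zero; hence $pA$ is a strongly nilpotent brace of nilpotency index at most $p-1$. Moreover, every $*$-product (with any distribution of brackets) of $i$ elements of $pA$ together with any number of elements of $A$ lies in $p^{i}A$; hence every such product containing $p-1$ elements from $pA$ (and any number of elements from $A$) is zero. Finally, $p^{p-1}A=0$.
   Context: A (left) brace is a set $A$ with operations $+,\circ$ such that $(A,+)$ is an abelian group, $(A,\circ)$ is a group, and $a\circ(b+c)+a=a\circ b+a\circ c$ for all $a,b,c\in A$. One writes $a*b=a\circ b-a-b$; then $a*(b+c)=a*b+a*c$. For an integer $m$, $mA=\{ma:a\in A\}$. A brace $B$ is strongly nilpotent if there is $k$ with $B^{[k]}=0$, where $B^{[1]}=B$ and $B^{[i]}$ is the additive span of all $a*b$ with $a\in B^{[j]}$, $b\in B^{[i-j]}$, $0<j<i$; the least such $k$ is the nilpotency index. *)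

theory Defs
  imports "HOL-Computational_Algebra.Primes"
begin

definition left_brace :: "('a::ab_group_add \<Rightarrow> 'a \<Rightarrow> 'a) \<Rightarrow> bool" where
  "left_brace circ \<longleftrightarrow>
     (\<forall>a b c. circ (circ a b) c = circ a (circ b c)) \<and>
     (\<exists>e. (\<forall>a. circ e a = a \<and> circ a e = a) \<and> (\<forall>a. \<exists>b. circ a b = e \<and> circ b a = e)) \<and>
     (\<forall>a b c. circ a (b + c) + a = circ a b + circ a c)"

definition star :: "('a::ab_group_add \<Rightarrow> 'a \<Rightarrow> 'a) \<Rightarrow> 'a \<Rightarrow> 'a \<Rightarrow> 'a" where
  "star circ a b = circ a b - a - b"

primrec nsmul :: "nat \<Rightarrow> 'a::monoid_add \<Rightarrow> 'a" where
  "nsmul 0 a = 0"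
| "nsmul (Suc n) a = a + nsmul n a"

definition mult_set :: "nat \<Rightarrow> 'a::monoid_add set" where
  "mult_set m = {nsmul m a | a. True}"

definition sub_brace :: "('a::ab_group_add \<Rightarrow> 'a \<Rightarrow> 'a) \<Rightarrow> 'a set \<Rightarrow> bool" where
  "sub_brace circ B \<longleftrightarrow>
     0 \<in> B \<and> (\<forall>a\<in>B. \<forall>b\<in>B. a + b \<in> B) \<and> (\<forall>a\<in>B. - a \<in> B) \<and>
     (\<forall>a\<in>B. \<forall>b\<in>B. circ a b \<in> B) \<and>
     (\<forall>a\<in>B. \<exists>b\<in>B. \<forall>x. circ (circ a b) x = x \<and> circ x (circ a b) = x)"

text \<open>Bracketed products: binary trees with leaves in A, evaluated with star.\<close>
datatype 'a btree = Leaf 'a | Node "'a btree" "'a btree"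

primrec leaves :: "'a btree \<Rightarrow> 'a list" where
  "leaves (Leaf a) = [a]"
| "leaves (Node l r) = leaves l @ leaves r"

primrec tree_eval :: "('a::ab_group_add \<Rightarrow> 'a \<Rightarrow> 'a) \<Rightarrow> 'a btree \<Rightarrow> 'a" where
  "tree_eval circ (Leaf a) = a"
| "tree_eval circ (Node l r) = star circ (tree_eval circ l) (tree_eval circ r)"

text \<open>spow circ B i = B^[i]: B^[1] = B and B^[i] is the additive span of the
a * b with a in B^[j], b in B^[i-j], 0 < j < i (spow circ B 0 = {0} is junk).\<close>
inductive in_spow :: "('a::ab_group_add \<Rightarrow> 'a \<Rightarrow> 'a) \<Rightarrow> 'a set \<Rightarrow> nat \<Rightarrow> 'a \<Rightarrow> bool"
  for circ B where
  base: "b \<in> B \<Longrightarrow> in_spow circ B 1 b"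
| prod: "in_spow circ B j a \<Longrightarrow> in_spow circ B k b \<Longrightarrow> 0 < j \<Longrightarrow> 0 < k
         \<Longrightarrow> in_spow circ B (j + k) (star circ a b)"
| zero: "in_spow circ B i 0"
| add: "in_spow circ B i x \<Longrightarrow> in_spow circ B i y \<Longrightarrow> in_spow circ B i (x + y)"
| neg: "in_spow circ B i x \<Longrightarrow> in_spow circ B i (- x)"

definition spow :: "('a::ab_group_add \<Rightarrow> 'a \<Rightarrow> 'a) \<Rightarrow> 'a set \<Rightarrow> nat \<Rightarrow> 'a set" where
  "spow circ B i = {x. in_spow circ B i x}"

definition strongly_nilpotent_index_le :: "('a::ab_group_add \<Rightarrow> 'a \<Rightarrow> 'a) \<Rightarrow> 'a set \<Rightarrow> nat \<Rightarrow> bool" where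
  "strongly_nilpotent_index_le circ B m \<longleftrightarrow> (\<exists>k. 1 \<le> k \<and> k \<le> m \<and> spow circ B k = {0})"

end

theory Submission
  imports Defs "HOL-Algebra.Group_Action" "HOL-Algebra.Multiplicative_Group"
begin

lemma nsmul_add: "nsmul (m + k) a = nsmul m a + nsmul k (a::'a::ab_group_add)"
  by (induction m) (auto simp: add.assoc)
lemma nsmul_distrib: "nsmul m (a + b) = nsmul m a + nsmul m (b::'a::ab_group_add)"
  by (induction m) (auto simp: algebra_simps)
lemma nsmul_mult: "nsmul (m * k) a = nsmul m (nsmul k (a::'a::ab_group_add))"
  by (induction m) (auto simp: nsmul_add nsmul_distrib)
lemma nsmul_zero[simp]: "nsmul m (0::'a::ab_group_add) = 0"
  by (induction m) auto
lemma nsmul_one[simp]: "nsmul 1 (a::'a::ab_group_add) = a" by simp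
lemma nsmul_neg: "nsmul m (- a) = - nsmul m (a::'a::ab_group_add)"
  by (induction m) (auto simp: algebra_simps)
lemma nsmul_diff: "nsmul m (a - b) = nsmul m a - nsmul m (b::'a::ab_group_add)"
  using nsmul_distrib[of m a "- b"] by (simp add: nsmul_neg)
lemma nsmul_sum: "nsmul m (sum f S) = (\<Sum>i\<in>S. nsmul m (f i :: 'a::ab_group_add))"
  by (induction S rule: infinite_finite_induct) (auto simp: nsmul_distrib)

lemma mult_set_add: "a \<in> mult_set m \<Longrightarrow> b \<in> mult_set m \<Longrightarrow> a + b \<in> (mult_set m :: 'a::ab_group_add set)"
  unfolding mult_set_def by (auto simp: nsmul_distrib[symmetric])
lemma mult_set_neg: "a \<in> mult_set m \<Longrightarrow> - a \<in> (mult_set m :: 'a::ab_group_add set)"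
  unfolding mult_set_def by (auto simp: nsmul_neg[symmetric])
lemma mult_set_diff: "a \<in> mult_set m \<Longrightarrow> b \<in> mult_set m \<Longrightarrow> a - b \<in> (mult_set m :: 'a::ab_group_add set)"
  using mult_set_add mult_set_neg by (metis diff_conv_add_uminus)
lemma mult_set_zero: "0 \<in> (mult_set m :: 'a::ab_group_add set)"
  unfolding mult_set_def by (auto intro: exI[of _ 0])
lemma mult_set_nsmul: "nsmul m a \<in> mult_set m"
  unfolding mult_set_def by auto
lemma mult_set_sum: "(\<And>i. i \<in> S \<Longrightarrow> f i \<in> mult_set m) \<Longrightarrow> sum f S \<in> (mult_set m :: 'a::ab_group_add set)"
  by (induction S rule: infinite_finite_induct) (auto simp: mult_set_zero mult_set_add)
lemma mult_set_mono: "i \<le> k \<Longrightarrow> (mult_set (p ^ k) :: 'a::ab_group_add set) \<subseteq> mult_set (p ^ i)"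
proof
  fix x assume "i \<le> k" "x \<in> (mult_set (p ^ k) :: 'a set)"
  then obtain a where "x = nsmul (p^k) a" unfolding mult_set_def by auto
  also have "p ^ k = p ^ i * p ^ (k - i)" using \<open>i \<le> k\<close> by (metis power_add le_add_diff_inverse)
  finally show "x \<in> mult_set (p ^ i)" by (simp add: nsmul_mult mult_set_nsmul)
qed

locale lbrace =
  fixes circ :: "'a::{ab_group_add,finite} \<Rightarrow> 'a \<Rightarrow> 'a"
  assumes lb: "left_brace circ"
begin

lemma assoc: "circ (circ a b) c = circ a (circ b c)"
  using lb unfolding left_brace_def by blast
lemma distr: "circ a (b + c) + a = circ a b + circ a c"
  using lb unfolding left_brace_def by blast
lemma right_zero[simp]: "circ a 0 = a"
  using distr[of a 0 0] by simp
lemma left_zero[simp]: "circ 0 a = a"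
proof -
  obtain e where e: "\<forall>a. circ e a = a \<and> circ a e = a"
    using lb unfolding left_brace_def by blast
  have "e = 0" using e right_zero[of e] by metis
  thus ?thesis using e by blast
qed
lemma ex_inv: "\<exists>b. circ a b = 0 \<and> circ b a = 0"
proof -
  obtain e where e: "\<forall>a. circ e a = a \<and> circ a e = a" and i: "\<forall>a. \<exists>b. circ a b = e \<and> circ b a = e"
    using lb unfolding left_brace_def by blast
  have "e = 0" using e right_zero[of e] by metis
  thus ?thesis using i by blast
qed

definition cinv :: "'a \<Rightarrow> 'a" where "cinv a = (SOME b. circ a b = 0 \<and> circ b a = 0)"
lemma cinv_r[simp]: "circ a (cinv a) = 0" and cinv_l[simp]: "circ (cinv a) a = 0"
  using someI_ex[OF ex_inv[of a]] unfolding cinv_def by auto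

definition lam :: "'a \<Rightarrow> 'a \<Rightarrow> 'a" where "lam a x = circ a x - a"

lemma circ_lam: "circ a x = a + lam a x" by (simp add: lam_def)
lemma lam_add: "lam a (x + y) = lam a x + lam a y"
  using distr[of a x y] unfolding lam_def by (simp add: algebra_simps)
lemma lam_zero[simp]: "lam a 0 = 0" by (simp add: lam_def)
lemma lam_neg: "lam a (- x) = - lam a x"
  using lam_add[of a x "-x"] by (simp add: add_eq_0_iff)
lemma lam_diff: "lam a (x - y) = lam a x - lam a y"
  using lam_add[of a x "- y"] by (simp add: lam_neg)
lemma lam_nsmul: "lam a (nsmul m x) = nsmul m (lam a x)"
  by (induction m) (auto simp: lam_add)
lemma lam_sum: "lam a (sum f S) = (\<Sum>i\<in>S. lam a (f i))"
  by (induction S rule: infinite_finite_induct) (auto simp: lam_add)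
lemma lam_circ: "lam (circ a b) x = lam a (lam b x)"
proof -
  have h: "circ a (circ b x) = a + lam a b + lam a (lam b x)"
    by (simp add: circ_lam lam_add add.assoc)
  have "lam (circ a b) x = circ a (circ b x) - circ a b" by (simp add: lam_def assoc)
  also have "\<dots> = lam a (lam b x)" unfolding h circ_lam[of a b] by simp
  finally show ?thesis .
qed
lemma lam_0[simp]: "lam 0 x = x" by (simp add: lam_def)
lemma lam_inv[simp]: "lam a (lam (cinv a) x) = x" "lam (cinv a) (lam a x) = x"
  by (simp_all add: lam_circ[symmetric])
lemma plus_circ: "a + b = circ a (lam (cinv a) b)"
  by (simp add: circ_lam)

lemma star_lam: "star circ a x = lam a x - x"
  by (simp add: star_def lam_def)
lemma star_add: "star circ a (x + y) = star circ a x + star circ a y"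
  by (simp add: star_lam lam_add)
lemma star_zero[simp]: "star circ a 0 = 0" by (simp add: star_lam)
lemma star_neg: "star circ a (- x) = - star circ a x"
  by (simp add: star_lam lam_neg)
lemma star_nsmul: "star circ a (nsmul m x) = nsmul m (star circ a x)"
  by (induction m) (auto simp: star_add)
lemma star_0[simp]: "star circ 0 x = 0" by (simp add: star_lam)

definition Gc :: "'a monoid" where "Gc = \<lparr>carrier = UNIV, mult = circ, one = 0\<rparr>"
lemma group_Gc: "group Gc"
  apply (rule groupI) apply (auto simp: Gc_def assoc)
  by (metis cinv_l)
lemma order_Gc: "order Gc = card (UNIV :: 'a set)"
  by (simp add: order_def Gc_def)

end

lemma group_action_intro':
  assumes G: "group G"
    and cl: "\<And>g x. g \<in> carrier G \<Longrightarrow> x \<in> E \<Longrightarrow> act g x \<in> E"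
    and one: "\<And>x. x \<in> E \<Longrightarrow> act \<one>\<^bsub>G\<^esub> x = x"
    and mul: "\<And>g h x. g \<in> carrier G \<Longrightarrow> h \<in> carrier G \<Longrightarrow> x \<in> E \<Longrightarrow> act (g \<otimes>\<^bsub>G\<^esub> h) x = act g (act h x)"
  shows "group_action G E (\<lambda>g. restrict (act g) E)"
proof -
  interpret group G by (rule G)
  have bij: "restrict (act g) E \<in> Bij E" if g: "g \<in> carrier G" for g
  proof -
    have "bij_betw (act g) E E"
    proof (rule bij_betwI[where g = "act (inv\<^bsub>G\<^esub> g)"])
      show "act g \<in> E \<rightarrow> E" using cl g by auto
      show "act (inv\<^bsub>G\<^esub> g) \<in> E \<rightarrow> E" using cl g by auto
      show "act (inv\<^bsub>G\<^esub> g) (act g x) = x" if "x \<in> E" for x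
        using mul[of "inv\<^bsub>G\<^esub> g" g x] one that g by simp
      show "act g (act (inv\<^bsub>G\<^esub> g) y) = y" if "y \<in> E" for y
        using mul[of g "inv\<^bsub>G\<^esub> g" y] one that g by simp
    qed
    thus ?thesis unfolding Bij_def by (simp add: bij_betw_restrict_eq)
  qed
  show ?thesis
    unfolding group_action_def group_hom_def group_hom_axioms_def
  proof (intro conjI)
    show "group G" by (rule G)
    show "group (BijGroup E)" by (rule group_BijGroup)
    show "(\<lambda>g. restrict (act g) E) \<in> hom G (BijGroup E)"
      unfolding hom_def
    proof (intro CollectI conjI ballI)
      show "(\<lambda>g. restrict (act g) E) \<in> carrier G \<rightarrow> carrier (BijGroup E)"
        using bij by (auto simp: BijGroup_def)
      fix x y assume xy: "x \<in> carrier G" "y \<in> carrier G"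
      show "restrict (act (x \<otimes>\<^bsub>G\<^esub> y)) E = restrict (act x) E \<otimes>\<^bsub>BijGroup E\<^esub> restrict (act y) E"
        using bij[OF xy(1)] bij[OF xy(2)] xy
        by (auto simp: BijGroup_def compose_def mul cl intro!: ext)
    qed
  qed
qed

lemma (in group_action) fixed_point_mod:
  assumes fin: "finite E" and p: "prime (p::nat)" and ord: "order G = p ^ n"
    and dvd: "p dvd card E" and x0: "x0 \<in> E" and fix0: "\<And>g. g \<in> carrier G \<Longrightarrow> \<phi> g x0 = x0"
  shows "\<exists>x\<in>E. x \<noteq> x0 \<and> (\<forall>g\<in>carrier G. \<phi> g x = x)"
proof (rule ccontr)
  assume nf: "\<not> ?thesis"
  interpret G: group G using group_hom group_hom.axioms(1) by auto
  have o0: "orbit G \<phi> x0 = {x0}"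
    unfolding orbit_def using fix0 G.one_closed by (auto intro!: exI[of _ "\<one>\<^bsub>G\<^esub>"])
  define C where "C = orbits G E \<phi> - {{x0}}"
  have orbE: "orbit G \<phi> x \<subseteq> E" if "x \<in> E" for x
    using orbits_coverture that unfolding orbits_def by blast
  have UC: "\<Union>C = E - {x0}"
  proof
    show "\<Union>C \<subseteq> E - {x0}"
    proof
      fix y assume "y \<in> \<Union>C"
      then obtain z where z: "z \<in> E" "y \<in> orbit G \<phi> z" "orbit G \<phi> z \<noteq> {x0}"
        unfolding C_def orbits_def by auto
      have "y \<noteq> x0"
      proof
        assume "y = x0"
        hence "orbit G \<phi> z \<inter> orbit G \<phi> x0 \<noteq> {}" using z o0 by auto
        hence "orbit G \<phi> z = orbit G \<phi> x0"
          using disjoint_union[of "orbit G \<phi> z" "orbit G \<phi> x0"] z x0 unfolding orbits_def by blast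
        thus False using z o0 by auto
      qed
      thus "y \<in> E - {x0}" using z orbE by auto
    qed
    show "E - {x0} \<subseteq> \<Union>C"
    proof
      fix y assume y: "y \<in> E - {x0}"
      have "orbit G \<phi> y \<noteq> {x0}" using orbit_refl[of y] y by auto
      thus "y \<in> \<Union>C" using orbit_refl[of y] y unfolding C_def orbits_def by auto
    qed
  qed
  have finG: "finite (carrier G)"
    using ord p unfolding order_def by (metis card.infinite not_prime_0 power_not_zero)
  have pdvd: "p dvd card c" if c: "c \<in> C" for c
  proof -
    obtain x where x: "x \<in> E" "c = orbit G \<phi> x" "c \<noteq> {x0}" using c unfolding C_def orbits_def by auto
    have "card c * card (stabilizer G \<phi> x) = p ^ n"
      using orbit_stabilizer_theorem[OF x(1)] x ord by simp
    hence "card c dvd p ^ n" by (metis dvd_triv_left)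
    then obtain k where k: "card c = p ^ k" using p by (auto simp: divides_primepow_nat)
    show ?thesis
    proof (cases k)
      case 0
      hence "card c = 1" using k by simp
      then obtain z where "c = {z}" using card_1_singletonE by blast
      hence "c = {x}" using orbit_refl[OF x(1)] x(2) by auto
      hence "\<forall>g\<in>carrier G. \<phi> g x = x" using x(2) unfolding orbit_def by auto
      moreover have "x \<noteq> x0" using x \<open>c = {x}\<close> by auto
      ultimately show ?thesis using nf x(1) by blast
    next
      case (Suc m) thus ?thesis using k by simp
    qed
  qed
  have disj: "\<forall>c1\<in>C. \<forall>c2\<in>C. c1 \<noteq> c2 \<longrightarrow> c1 \<inter> c2 = {}"
    using disjoint_union unfolding C_def by blast
  have "p dvd card (\<Union>C)"
    by (rule dvd_partition) (use UC fin pdvd disj in auto)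
  hence "p dvd card E - 1" using UC x0 fin by (simp add: card_Diff_singleton)
  moreover have "card E \<ge> 1" using fin x0 by (metis One_nat_def Suc_leI card_gt_0_iff empty_iff)
  ultimately have "p dvd 1" using dvd by (metis dvd_diff_nat le_add_diff_inverse2 nat_dvd_not_less zero_less_one diff_diff_cancel)
  thus False using p by simp
qed


context lbrace
begin

definition asub :: "'a set \<Rightarrow> bool" where
  "asub V \<longleftrightarrow> 0 \<in> V \<and> (\<forall>x\<in>V. \<forall>y\<in>V. x + y \<in> V) \<and> (\<forall>x\<in>V. - x \<in> V)"
definition isub :: "'a set \<Rightarrow> bool" where
  "isub V \<longleftrightarrow> asub V \<and> (\<forall>a. \<forall>x\<in>V. lam a x \<in> V)"

lemma isub_UNIV: "isub UNIV" by (simp add: isub_def asub_def)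

lemma isub_star: "isub V \<Longrightarrow> x \<in> V \<Longrightarrow> star circ a x \<in> V"
  unfolding isub_def asub_def star_lam by (metis diff_conv_add_uminus)

lemma isub_lam_image: assumes "isub W" shows "lam a ` W = W"
proof
  show "lam a ` W \<subseteq> W" using assms unfolding isub_def by auto
  show "W \<subseteq> lam a ` W"
  proof
    fix w assume "w \<in> W"
    hence "lam (cinv a) w \<in> W" using assms unfolding isub_def by auto
    thus "w \<in> lam a ` W" using lam_inv(1)[of a w] by (metis image_eqI)
  qed
qed

definition Ga :: "'a monoid" where "Ga = \<lparr>carrier = UNIV, mult = (+), one = 0\<rparr>"
lemma group_Ga: "group Ga"
  apply (rule groupI) apply (auto simp: Ga_def add.assoc)
  by (metis add.left_inverse)

definition HV :: "'a set \<Rightarrow> 'a monoid" where "HV V = \<lparr>carrier = V, mult = (+), one = 0\<rparr>"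

lemma inv_Ga: "inv\<^bsub>Ga\<^esub> x = - x"
  using group.inv_equality[OF group_Ga, of "- x" x] by (simp add: Ga_def)

lemma asub_subgroup: "asub V \<Longrightarrow> subgroup V Ga"
  unfolding subgroup_def asub_def by (auto simp: Ga_def inv_Ga[unfolded Ga_def])

lemma HV_eq: "HV V = Ga\<lparr>carrier := V\<rparr>" by (simp add: HV_def Ga_def)

lemma group_HV: "asub V \<Longrightarrow> group (HV V)"
  unfolding HV_eq by (rule group.subgroup_imp_group[OF group_Ga asub_subgroup])

lemma inv_HV: "asub V \<Longrightarrow> x \<in> V \<Longrightarrow> inv\<^bsub>HV V\<^esub> x = - x"
  using group.inv_equality[OF group_HV, of V "- x" x] by (simp add: HV_def asub_def)

lemma asub_subgroup_HV: "asub V \<Longrightarrow> asub W \<Longrightarrow> W \<subseteq> V \<Longrightarrow> subgroup W (HV V)"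
  unfolding subgroup_def using inv_HV[of V] by (auto simp: HV_def asub_def)

lemma card_asub_dvd: "asub V \<Longrightarrow> card V dvd card (UNIV :: 'a set)"
  using group.lagrange[OF group_Ga asub_subgroup, of V] by (metis Ga_def dvd_triv_right order_def partial_object.select_convs(1))

lemma rcos_HV: "W #>\<^bsub>HV V\<^esub> x = (\<lambda>h. h + x) ` W"
  unfolding r_coset_def by (auto simp: HV_def)

lemma rcosets_HV: "rcosets\<^bsub>HV V\<^esub> W = (\<lambda>x. (\<lambda>h. h + x) ` W) ` V"
  unfolding RCOSETS_def rcos_HV by (auto simp: HV_def)

lemma card_rcosets_HV: "asub V \<Longrightarrow> asub W \<Longrightarrow> W \<subseteq> V \<Longrightarrow> card (rcosets\<^bsub>HV V\<^esub> W) * card W = card V"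
  using group.lagrange[OF group_HV asub_subgroup_HV, of V W] by (simp add: order_def HV_def)

end

locale pbrace = lbrace circ for circ :: "'a::{ab_group_add,finite} \<Rightarrow> 'a \<Rightarrow> 'a" +
  fixes p n :: nat
  assumes prime_p: "prime p" and cardA: "card (UNIV :: 'a set) = p ^ n"
begin

lemma card_asub: assumes "asub V" shows "\<exists>k. card V = p ^ k"
proof -
  have "\<exists>i\<le>n. card V = p ^ i" using card_asub_dvd[OF assms] cardA prime_p by (simp add: divides_primepow_nat)
  thus ?thesis by blast
qed

lemma card_psubset: assumes "asub V" "asub W" "W \<subset> V" shows "p * card W \<le> card V"
proof -
  obtain a b where a: "card W = p ^ a" and b: "card V = p ^ b" using card_asub assms by metis
  have "card W < card V" using assms by (simp add: psubset_card_mono)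
  hence "a < b" using a b prime_p by (metis power_less_imp_less_exp prime_gt_1_nat)
  hence "p ^ Suc a \<le> p ^ b" using prime_p by (metis Suc_leI power_increasing prime_ge_1_nat)
  thus ?thesis using a b by simp
qed

lemma fixed_coset:
  assumes V: "isub V" and W: "isub W" and WV: "W \<subset> V"
  shows "\<exists>v\<in>V. v \<notin> W \<and> (\<forall>a. star circ a v \<in> W)"
proof -
  have aV: "asub V" and aW: "asub W" using V W by (auto simp: isub_def)
  define X where "X = rcosets\<^bsub>HV V\<^esub> W"
  have X: "X = (\<lambda>x. (\<lambda>h. h + x) ` W) ` V" unfolding X_def rcosets_HV ..
  have img: "lam a ` ((\<lambda>h. h + x) ` W) = (\<lambda>h. h + lam a x) ` W" for a x
  proof -
    have "lam a ` ((\<lambda>h. h + x) ` W) = (\<lambda>h. h + lam a x) ` (lam a ` W)"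
      by (auto simp: image_image lam_add)
    thus ?thesis using isub_lam_image[OF W] by simp
  qed
  have act: "group_action Gc X (\<lambda>g. restrict (\<lambda>S. lam g ` S) X)"
  proof (rule group_action_intro'[OF group_Gc])
    fix g S assume "S \<in> X"
    then obtain x where "x \<in> V" "S = (\<lambda>h. h + x) ` W" using X by auto
    moreover have "lam g x \<in> V" using V \<open>x \<in> V\<close> by (auto simp: isub_def)
    ultimately show "lam g ` S \<in> X" using img X by auto
  next
    fix S show "lam \<one>\<^bsub>Gc\<^esub> ` S = S" by (simp add: Gc_def)
  next
    fix g h S show "lam (g \<otimes>\<^bsub>Gc\<^esub> h) ` S = lam g ` (lam h ` S)"
      by (simp add: Gc_def lam_circ image_image)
  qed
  have W00: "(\<lambda>h. h + 0) ` W = W" by simp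
  have W0: "W \<in> X" using X aV W00 unfolding asub_def by (metis image_eqI)
  have finX: "finite X" using X by simp
  obtain a b where a: "card W = p ^ a" and b: "card V = p ^ b" using card_asub aV aW by metis
  have "p * card W \<le> card V" using card_psubset aV aW WV by simp
  hence "p ^ Suc a \<le> p ^ b" using a b by simp
  hence "Suc a \<le> b" using prime_gt_1_nat[OF prime_p] by (rule power_le_imp_le_exp[rotated])
  hence "a < b" by simp
  have cX: "card X * p ^ a = p ^ b" using card_rcosets_HV[OF aV aW] WV a b X_def by auto
  also have "p ^ b = p ^ (b - a) * p ^ a" using \<open>a < b\<close> by (metis power_add le_add_diff_inverse2 less_imp_le)
  finally have "card X = p ^ (b - a)" using prime_gt_0_nat[OF prime_p] by simp
  hence pX: "p dvd card X" using \<open>a < b\<close> by simp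
  have "\<exists>S\<in>X. S \<noteq> W \<and> (\<forall>g\<in>carrier Gc. restrict (\<lambda>S. lam g ` S) X S = S)"
    by (rule group_action.fixed_point_mod[OF act finX prime_p _ pX W0])
       (auto simp: order_Gc cardA isub_lam_image[OF W] W0)
  then obtain S where S: "S \<in> X" "S \<noteq> W" "\<And>g. lam g ` S = S" by (auto simp: Gc_def)
  obtain v where v: "v \<in> V" "S = (\<lambda>h. h + v) ` W" using S X by auto
  have "v \<notin> W"
  proof
    assume "v \<in> W"
    have "(\<lambda>h. h + v) ` W = W"
    proof
      show "(\<lambda>h. h + v) ` W \<subseteq> W" using aW \<open>v \<in> W\<close> unfolding asub_def by blast
      show "W \<subseteq> (\<lambda>h. h + v) ` W"
      proof
        fix w assume "w \<in> W"
        hence "w - v \<in> W" using aW \<open>v \<in> W\<close> unfolding asub_def by (metis diff_conv_add_uminus)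
        moreover have "w = (w - v) + v" by simp
        ultimately show "w \<in> (\<lambda>h. h + v) ` W" by blast
      qed
    qed
    thus False using S v by simp
  qed
  moreover have "star circ g v \<in> W" for g
  proof -
    have "0 \<in> W" using aW by (simp add: asub_def)
    hence "0 + v \<in> S" using v(2) by blast
    hence "v \<in> S" by simp
    hence "lam g v \<in> S" using S(3)[of g] by blast
    then obtain h where "h \<in> W" "lam g v = h + v" using v by auto
    thus ?thesis by (simp add: star_lam)
  qed
  ultimately show ?thesis using v(1) by blast
qed

end

lemma hom_zero: fixes f :: "'a::ab_group_add \<Rightarrow> 'a" assumes "\<And>x y. f (x + y) = f x + (f y :: 'a::ab_group_add)" shows "f 0 = 0"
  using assms[of 0 0] by (simp only: add_0_left add_cancel_right_right)

lemma hom_nsmul: fixes f :: "'a::ab_group_add \<Rightarrow> 'a" assumes "\<And>x y. f (x + y) = f x + (f y :: 'a::ab_group_add)"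
  shows "f (nsmul m x) = nsmul m (f x)"
  by (induction m) (auto simp: assms hom_zero[OF assms])

lemma hom_sum: fixes f :: "'a::ab_group_add \<Rightarrow> 'a" assumes "\<And>x y. f (x + y) = f x + (f y :: 'a::ab_group_add)"
  shows "f (sum g S) = (\<Sum>i\<in>S. f (g i))"
  by (induction S rule: infinite_finite_induct) (auto simp: assms hom_zero[OF assms])

lemma pascal_sum:
  fixes g :: "nat \<Rightarrow> 'a::ab_group_add"
  shows "(\<Sum>m\<le>Suc k. nsmul (Suc k choose m) (g m)) =
         (\<Sum>m\<le>k. nsmul (k choose m) (g m)) + (\<Sum>m\<le>k. nsmul (k choose m) (g (Suc m)))"
proof -
  have "(\<Sum>m\<le>Suc k. nsmul (Suc k choose m) (g m)) =
        nsmul (Suc k choose 0) (g 0) + (\<Sum>m\<le>k. nsmul (Suc k choose Suc m) (g (Suc m)))"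
    by (rule sum.atMost_Suc_shift)
  also have "\<dots> = g 0 + (\<Sum>m\<le>k. nsmul (k choose m) (g (Suc m)) + nsmul (k choose Suc m) (g (Suc m)))"
    by (simp add: nsmul_add)
  also have "\<dots> = g 0 + (\<Sum>m\<le>k. nsmul (k choose m) (g (Suc m))) + (\<Sum>m\<le>k. nsmul (k choose Suc m) (g (Suc m)))"
    by (simp add: sum.distrib add.assoc)
  finally have 1: "(\<Sum>m\<le>Suc k. nsmul (Suc k choose m) (g m)) =
        g 0 + (\<Sum>m\<le>k. nsmul (k choose m) (g (Suc m))) + (\<Sum>m\<le>k. nsmul (k choose Suc m) (g (Suc m)))" .
  have "(\<Sum>m\<le>Suc k. nsmul (k choose m) (g m)) = nsmul (k choose 0) (g 0) + (\<Sum>m\<le>k. nsmul (k choose Suc m) (g (Suc m)))"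
    by (rule sum.atMost_Suc_shift)
  hence 2: "(\<Sum>m\<le>Suc k. nsmul (k choose m) (g m)) = g 0 + (\<Sum>m\<le>k. nsmul (k choose Suc m) (g (Suc m)))"
    by simp
  have 3: "(\<Sum>m\<le>Suc k. nsmul (k choose m) (g m)) = (\<Sum>m\<le>k. nsmul (k choose m) (g m))"
    by (simp add: sum.atMost_Suc binomial_eq_0)
  show ?thesis using 1 2 3 by (simp add: algebra_simps)
qed

lemma binom_op:
  fixes f :: "'a::ab_group_add \<Rightarrow> 'a"
  assumes add: "\<And>x y. f (x + y) = f x + (f y :: 'a::ab_group_add)"
  shows "((\<lambda>y. y + f y) ^^ k) x = (\<Sum>m\<le>k. nsmul (k choose m) ((f ^^ m) x))"
proof (induction k)
  case 0 show ?case by simp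
next
  case (Suc k)
  have "((\<lambda>y. y + f y) ^^ Suc k) x = ((\<lambda>y. y + f y) ^^ k) x + f (((\<lambda>y. y + f y) ^^ k) x)" by simp
  also have "\<dots> = (\<Sum>m\<le>k. nsmul (k choose m) ((f ^^ m) x)) + (\<Sum>m\<le>k. nsmul (k choose m) ((f ^^ Suc m) x))"
    unfolding Suc hom_sum[of f, OF add] hom_nsmul[of f, OF add] by simp
  also have "\<dots> = (\<Sum>m\<le>Suc k. nsmul (Suc k choose m) ((f ^^ m) x))"
    by (rule pascal_sum[symmetric])
  finally show ?case .
qed

primrec cp :: "'a \<Rightarrow> ('a \<Rightarrow> 'a) \<Rightarrow> nat \<Rightarrow> 'a::ab_group_add" where
  "cp c f 0 = 0"
| "cp c f (Suc k) = c + (cp c f k + f (cp c f k))"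

lemma cp_formula:
  fixes f :: "'a::ab_group_add \<Rightarrow> 'a"
  assumes add: "\<And>x y. f (x + y) = f x + (f y :: 'a::ab_group_add)"
  shows "cp c f k = (\<Sum>m<k. nsmul (k choose Suc m) ((f ^^ m) c))"
proof (induction k)
  case 0 show ?case by simp
next
  case (Suc k)
  have "(\<Sum>m<Suc k. nsmul (Suc k choose Suc m) ((f ^^ m) c)) =
        (\<Sum>m<Suc k. nsmul (k choose m) ((f ^^ m) c)) + (\<Sum>m<Suc k. nsmul (k choose Suc m) ((f ^^ m) c))"
    by (simp add: nsmul_add sum.distrib)
  also have "(\<Sum>m<Suc k. nsmul (k choose Suc m) ((f ^^ m) c)) = cp c f k"
    using Suc by (simp add: binomial_eq_0)
  also have "(\<Sum>m<Suc k. nsmul (k choose m) ((f ^^ m) c)) = c + (\<Sum>m<k. nsmul (k choose Suc m) ((f ^^ Suc m) c))"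
    unfolding sum.lessThan_Suc_shift by simp
  also have "(\<Sum>m<k. nsmul (k choose Suc m) ((f ^^ Suc m) c)) = f (cp c f k)"
    unfolding Suc hom_sum[of f, OF add] hom_nsmul[of f, OF add] by simp
  finally show ?case by (simp add: algebra_simps)
qed

lemma prime_power_dvd_choose:
  assumes p: "prime (p::nat)" and m: "0 < m" "m < p"
  shows "p ^ i dvd (p ^ i choose m)"
proof -
  have "m * (p ^ i choose m) = p ^ i * ((p ^ i - 1) choose (m - 1))"
    using times_binomial_minus1_eq[OF m(1)] by simp
  hence "p ^ i dvd m * (p ^ i choose m)" by simp
  moreover have "coprime (p ^ i) m"
    using prime_imp_coprime[OF p] m by (simp add: nat_dvd_not_less)
  ultimately show ?thesis using coprime_dvd_mult_left_iff by (metis mult.commute)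
qed


context pbrace
begin

lemma asub_0: "asub W \<Longrightarrow> 0 \<in> W" by (simp add: asub_def)
lemma asub_add: "asub W \<Longrightarrow> x \<in> W \<Longrightarrow> y \<in> W \<Longrightarrow> x + y \<in> W" by (simp add: asub_def)
lemma asub_neg: "asub W \<Longrightarrow> x \<in> W \<Longrightarrow> - x \<in> W" by (simp add: asub_def)

lemma isub_zero: "isub {0}" by (simp add: isub_def asub_def)

lemma asub_sum: "asub W \<Longrightarrow> (\<And>i. i \<in> S \<Longrightarrow> f i \<in> W) \<Longrightarrow> sum f S \<in> W"
  by (induction S rule: infinite_finite_induct) (auto simp: asub_def)

lemma asub_nsmul: "asub W \<Longrightarrow> x \<in> W \<Longrightarrow> nsmul m x \<in> W"
  by (induction m) (auto simp: asub_def)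

lemma core:
  assumes V: "isub V" and V0: "V \<noteq> {0}"
  shows "\<exists>W. isub W \<and> W \<subset> V \<and> (\<forall>a. \<forall>v\<in>V. star circ a v \<in> W)"
proof -
  define S where "S = {W. isub W \<and> W \<subset> V}"
  have "0 \<in> V" using V by (simp add: isub_def asub_def)
  hence S0: "{0} \<in> S" using V0 isub_zero unfolding S_def by auto
  have finS: "finite S" by (rule finite_subset[OF subset_UNIV finite_UNIV])
  define m where "m = Max (card ` S)"
  have "m \<in> card ` S" unfolding m_def using finS S0 by (intro Max_in) auto
  then obtain W where W: "W \<in> S" "card W = m" by auto
  have maxW: "card W' \<le> card W" if "W' \<in> S" for W'
    using W finS that unfolding m_def by (simp add: Max_ge)
  have iW: "isub W" and WV: "W \<subset> V" using W unfolding S_def by auto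
  have aW: "asub W" using iW by (simp add: isub_def)
  define F where "F = {v\<in>V. \<forall>a. star circ a v \<in> W}"
  have aV: "asub V" using V by (simp add: isub_def)
  have iF: "isub F"
    unfolding isub_def asub_def
  proof (intro conjI ballI allI)
    show "0 \<in> F" using \<open>0 \<in> V\<close> asub_0[OF aW] unfolding F_def by simp
    fix x y assume x: "x \<in> F" and y: "y \<in> F"
    have "star circ a (x + y) \<in> W" for a
      using x y asub_add[OF aW] unfolding F_def star_add by blast
    moreover have "x + y \<in> V" using x y asub_add[OF aV] unfolding F_def by blast
    ultimately show "x + y \<in> F" unfolding F_def by blast
  next
    fix x assume x: "x \<in> F"
    have "star circ a (- x) \<in> W" for a
      using x asub_neg[OF aW] unfolding F_def star_neg by blast
    moreover have "- x \<in> V" using x asub_neg[OF aV] unfolding F_def by blast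
    ultimately show "- x \<in> F" unfolding F_def by blast
  next
    fix b x assume x: "x \<in> F"
    have l: "lam b x = x + star circ b x" by (simp add: star_lam)
    have "lam b x \<in> V" using x V unfolding F_def isub_def by blast
    moreover have "star circ a (lam b x) \<in> W" for a
    proof -
      have "star circ b x \<in> W" using x unfolding F_def by blast
      hence "star circ a (star circ b x) \<in> W" using isub_star[OF iW] by blast
      moreover have "star circ a x \<in> W" using x unfolding F_def by blast
      ultimately show ?thesis unfolding l star_add using asub_add[OF aW] by blast
    qed
    ultimately show "lam b x \<in> F" unfolding F_def by blast
  qed
  have WF: "W \<subseteq> F" using WV isub_star[OF iW] unfolding F_def by blast
  obtain v where v: "v \<in> V" "v \<notin> W" "\<forall>a. star circ a v \<in> W"
    using fixed_coset[OF V iW WV] by blast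
  have "v \<in> F" using v unfolding F_def by auto
  hence WF': "W \<subset> F" using WF v by auto
  have "F = V"
  proof (rule ccontr)
    assume "F \<noteq> V"
    moreover have "F \<subseteq> V" unfolding F_def by blast
    ultimately have "F \<subset> V" by blast
    hence "F \<in> S" using iF unfolding S_def by blast
    hence "card F \<le> card W" by (rule maxW)
    moreover have "card W < card F" using WF' by (simp add: psubset_card_mono)
    ultimately show False by simp
  qed
  have "\<forall>a. \<forall>v\<in>V. star circ a v \<in> W"
  proof (intro allI ballI)
    fix a v assume "v \<in> V"
    hence "v \<in> F" using \<open>F = V\<close> by simp
    thus "star circ a v \<in> W" unfolding F_def by blast
  qed
  thus ?thesis using iW WV by blast
qed

lemma funpow_star_zero: "(star circ c ^^ m) 0 = 0"
  by (induction m) auto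

lemma nil_sub:
  "isub V \<Longrightarrow> card V = p ^ k \<Longrightarrow> k \<le> m \<Longrightarrow> x \<in> V \<Longrightarrow> (star circ c ^^ m) x = 0"
proof (induction k arbitrary: V m x rule: less_induct)
  case (less k)
  show ?case
  proof (cases "V = {0}")
    case True thus ?thesis using less.prems funpow_star_zero by auto
  next
    case False
    obtain W where W: "isub W" "W \<subset> V" "\<forall>a. \<forall>v\<in>V. star circ a v \<in> W"
      using core[OF less.prems(1) False] by blast
    have "asub W" using W(1) by (simp add: isub_def)
    then obtain j where j: "card W = p ^ j" using card_asub by blast
    have "p * card W \<le> card V" using card_psubset W less.prems(1) by (auto simp: isub_def)
    hence "p ^ Suc j \<le> p ^ k" using j less.prems(2) by simp
    hence "Suc j \<le> k" using prime_gt_1_nat[OF prime_p] by (rule power_le_imp_le_exp[rotated])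
    then obtain m' where m': "m = Suc m'" using less.prems(3) by (cases m) auto
    have "(star circ c ^^ m) x = (star circ c ^^ m') (star circ c x)"
      unfolding m' funpow_Suc_right by simp
    also have "\<dots> = 0"
      using less.IH[of j W m' "star circ c x"] W j \<open>Suc j \<le> k\<close> less.prems m' by auto
    finally show ?thesis .
  qed
qed

lemma nilA: "n \<le> m \<Longrightarrow> (star circ c ^^ m) x = 0"
  using nil_sub[OF isub_UNIV cardA] by auto

end


locale pbrace2 = pbrace +
  assumes np: "n + 1 < p"
begin

lemma lam_eq: "lam c = (\<lambda>y. y + star circ c y)"
  by (rule ext) (simp add: star_lam)

primrec cpow :: "'a \<Rightarrow> nat \<Rightarrow> 'a" where
  "cpow c 0 = 0"
| "cpow c (Suc k) = circ c (cpow c k)"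

lemma lam_cpow: "lam (cpow c k) x = (lam c ^^ k) x"
  by (induction k arbitrary: x) (auto simp: lam_circ)

lemma cpow_cp: "cpow c k = cp c (star circ c) k"
  by (induction k) (simp_all add: star_def algebra_simps)

lemma star_hom: "star circ c (x + y) = star circ c x + star circ c y" by (rule star_add)

lemma term_mult:
  assumes "0 < k" "k < p \<or> n \<le> m"
  shows "nsmul (p ^ i choose k) ((star circ c ^^ m) x) = nsmul (p ^ i) (nsmul ((p ^ i choose k) div p ^ i) ((star circ c ^^ m) x))"
proof (cases "k < p")
  case True
  have "p ^ i dvd (p ^ i choose k)" using prime_power_dvd_choose[OF prime_p assms(1) True] .
  thus ?thesis by (simp add: nsmul_mult[symmetric])
next
  case False
  hence "(star circ c ^^ m) x = 0" using assms(2) by (intro nilA) auto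
  thus ?thesis by simp
qed

lemma funpow_star_isub: "isub W \<Longrightarrow> x \<in> W \<Longrightarrow> (star circ c ^^ m) x \<in> W"
  by (induction m) (auto intro: isub_star)

lemma lam_cpow_mod: "lam (cpow c (p ^ i)) x - x \<in> mult_set (p ^ i)"
proof -
  obtain q' where q': "p ^ i = Suc q'" using prime_gt_0_nat[OF prime_p] by (metis gr0_conv_Suc zero_less_power)
  have "lam (cpow c (p ^ i)) x = (\<Sum>m\<le>p ^ i. nsmul (p ^ i choose m) ((star circ c ^^ m) x))"
    unfolding lam_cpow lam_eq[of c] by (rule binom_op[OF star_hom])
  also have "\<dots> = x + (\<Sum>m\<le>q'. nsmul (p ^ i choose Suc m) ((star circ c ^^ Suc m) x))"
    unfolding q' sum.atMost_Suc_shift by simp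
  finally have "lam (cpow c (p ^ i)) x - x = (\<Sum>m\<le>q'. nsmul (p ^ i choose Suc m) ((star circ c ^^ Suc m) x))"
    by simp
  also have "\<dots> \<in> mult_set (p ^ i)"
  proof (rule mult_set_sum)
    fix m
    have "Suc m < p \<or> n \<le> Suc m" using np by auto
    thus "nsmul (p ^ i choose Suc m) ((star circ c ^^ Suc m) x) \<in> mult_set (p ^ i)"
      using term_mult[of "Suc m" "Suc m" i c x] by (simp only: zero_less_Suc mult_set_nsmul)
  qed
  finally show ?thesis .
qed

lemma cpow_decomp:
  assumes W: "isub W" "star circ c c \<in> W"
  shows "\<exists>y\<in>W. cpow c (p ^ i) = nsmul (p ^ i) c + nsmul (p ^ i) y"
proof -
  obtain q' where q': "p ^ i = Suc q'" using prime_gt_0_nat[OF prime_p] by (metis gr0_conv_Suc zero_less_power)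
  define y where "y = (\<Sum>m<q'. nsmul ((p ^ i choose Suc (Suc m)) div p ^ i) ((star circ c ^^ Suc m) c))"
  have "cpow c (p ^ i) = (\<Sum>m<p ^ i. nsmul (p ^ i choose Suc m) ((star circ c ^^ m) c))"
    unfolding cpow_cp by (rule cp_formula[OF star_hom])
  also have "\<dots> = nsmul (p ^ i) c + (\<Sum>m<q'. nsmul (p ^ i choose Suc (Suc m)) ((star circ c ^^ Suc m) c))"
    unfolding q' sum.lessThan_Suc_shift by simp
  also have "(\<Sum>m<q'. nsmul (p ^ i choose Suc (Suc m)) ((star circ c ^^ Suc m) c)) = nsmul (p ^ i) y"
    unfolding y_def nsmul_sum
  proof (rule sum.cong[OF refl])
    fix m
    have "Suc (Suc m) < p \<or> n \<le> Suc m" using np by auto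
    thus "nsmul (p ^ i choose Suc (Suc m)) ((star circ c ^^ Suc m) c) =
          nsmul (p ^ i) (nsmul ((p ^ i choose Suc (Suc m)) div p ^ i) ((star circ c ^^ Suc m) c))"
      using term_mult[of "Suc (Suc m)" "Suc m" i c c] by simp
  qed
  finally have eq: "cpow c (p ^ i) = nsmul (p ^ i) c + nsmul (p ^ i) y" .
  have aW: "asub W" using W by (simp add: isub_def)
  have "y \<in> W" unfolding y_def
  proof (rule asub_sum[OF aW])
    fix m
    have "(star circ c ^^ Suc m) c = (star circ c ^^ m) (star circ c c)"
      by (simp add: funpow_Suc_right del: funpow.simps)
    hence "(star circ c ^^ Suc m) c \<in> W" using funpow_star_isub[OF W(1) W(2)] by simp
    thus "nsmul ((p ^ i choose Suc (Suc m)) div p ^ i) ((star circ c ^^ Suc m) c) \<in> W"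
      by (rule asub_nsmul[OF aW])
  qed
  thus ?thesis using eq by blast
qed

lemma main:
  "isub V \<Longrightarrow> c \<in> V \<Longrightarrow> star circ (nsmul (p ^ i) c) x \<in> mult_set (p ^ i)"
proof (induction "card V" arbitrary: V c x rule: less_induct)
  case less
  show ?case
  proof (cases "V = {0}")
    case True thus ?thesis using less.prems by (auto simp: mult_set_zero)
  next
    case False
    obtain W where W: "isub W" "W \<subset> V" "\<forall>a. \<forall>v\<in>V. star circ a v \<in> W"
      using core[OF less.prems(1) False] by blast
    have cW: "card W < card V" using W(2) by (simp add: psubset_card_mono)
    define g where "g = cpow c (p ^ i)"
    obtain y where y: "y \<in> W" "g = nsmul (p ^ i) c + nsmul (p ^ i) y"
      using cpow_decomp[OF W(1)] W(3) less.prems(2) unfolding g_def by blast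
    define y' where "y' = lam (cinv g) (- y)"
    have y'W: "y' \<in> W" using W(1) y(1) unfolding y'_def isub_def asub_def by blast
    have eq: "nsmul (p ^ i) c = circ g (nsmul (p ^ i) y')"
      unfolding circ_lam lam_nsmul y'_def lam_inv using y(2) by (simp add: nsmul_neg)
    define z where "z = lam (nsmul (p ^ i) y') x"
    have "star circ (nsmul (p ^ i) c) x = (lam g z - z) + (z - x)"
      unfolding eq star_lam lam_circ z_def by simp
    moreover have "lam g z - z \<in> mult_set (p ^ i)" unfolding g_def by (rule lam_cpow_mod)
    moreover have "z - x \<in> mult_set (p ^ i)"
      using less.hyps[OF cW W(1) y'W, of x] unfolding z_def star_lam .
    ultimately show ?thesis using mult_set_add[of "lam g z - z" "p ^ i" "z - x"] by simp
  qed
qed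

lemma L: "a \<in> mult_set (p ^ i) \<Longrightarrow> star circ a x \<in> mult_set (p ^ i)"
  using main[OF isub_UNIV] unfolding mult_set_def by blast

end

context pbrace2
begin

lemma prod_mult: "a \<in> mult_set (p ^ j) \<Longrightarrow> b \<in> mult_set (p ^ k) \<Longrightarrow> star circ a b \<in> mult_set (p ^ (j + k))"
proof -
  assume a: "a \<in> mult_set (p ^ j)" and b: "b \<in> mult_set (p ^ k)"
  obtain z where z: "b = nsmul (p ^ k) z" using b unfolding mult_set_def by auto
  obtain w where w: "star circ a z = nsmul (p ^ j) w" using L[OF a, of z] unfolding mult_set_def by auto
  have "star circ a b = nsmul (p ^ k) (nsmul (p ^ j) w)" unfolding z star_nsmul w ..
  also have "\<dots> = nsmul (p ^ (j + k)) w" by (simp add: nsmul_mult[symmetric] power_add mult.commute)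
  finally show ?thesis by (simp add: mult_set_nsmul)
qed

lemma tree_mult: "tree_eval circ t \<in> mult_set (p ^ length (filter (\<lambda>x. x \<in> mult_set p) (leaves t)))"
proof (induction t)
  case (Leaf a)
  show ?case
  proof (cases "a \<in> mult_set p")
    case True thus ?thesis by simp
  next
    case False
    have "a = nsmul 1 a" by simp
    hence "a \<in> mult_set 1" unfolding mult_set_def by blast
    thus ?thesis using False by simp
  qed
next
  case (Node l r)
  thus ?case using prod_mult by simp
qed

lemma Ga_pow: "x [^]\<^bsub>Ga\<^esub> (m::nat) = nsmul m x"
  by (induction m) (simp_all add: Ga_def add.commute)

lemma nsmul_card: "nsmul (p ^ n) (x::'a) = 0"
proof -
  have o: "order Ga = p ^ n" using cardA by (simp add: order_def Ga_def)
  have "x [^]\<^bsub>Ga\<^esub> order Ga = \<one>\<^bsub>Ga\<^esub>" by (rule group.pow_order_eq_1[OF group_Ga]) (simp add: Ga_def)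
  hence "x [^]\<^bsub>Ga\<^esub> (p ^ n) = \<one>\<^bsub>Ga\<^esub>" unfolding o .
  thus ?thesis unfolding Ga_pow by (simp add: Ga_def)
qed

lemma zero_set: "mult_set (p ^ (p - 1)) = ({0} :: 'a set)"
proof
  show "{0::'a} \<subseteq> mult_set (p ^ (p - 1))" unfolding mult_set_def by (auto intro!: exI[of _ 0])
  show "mult_set (p ^ (p - 1)) \<subseteq> {0::'a}"
  proof
    fix x assume "x \<in> (mult_set (p ^ (p - 1)) :: 'a set)"
    then obtain a where a: "x = nsmul (p ^ (p - 1)) a" unfolding mult_set_def by auto
    have e: "p - 1 = (p - 1 - n) + n" using np by simp
    have "p ^ (p - 1) = p ^ (p - 1 - n) * p ^ n" by (metis e power_add)
    thus "x \<in> {0}" using a by (simp add: nsmul_mult nsmul_card)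
  qed
qed

lemma spow_mult: "in_spow circ (mult_set p) i x \<Longrightarrow> x \<in> mult_set (p ^ i)"
  by (induction rule: in_spow.induct)
     (auto simp: prod_mult mult_set_zero mult_set_add mult_set_neg)

end

theorem proposition4p1:
  fixes circ :: "'a::{ab_group_add,finite} \<Rightarrow> 'a \<Rightarrow> 'a" and p n :: nat
  assumes "left_brace circ" and "prime p" and "p > n + 1" and "card (UNIV :: 'a set) = p ^ n"
  shows "sub_brace circ (mult_set p) \<and>
     (\<forall>t. (\<forall>x\<in>set (leaves t). x \<in> mult_set p) \<and> length (leaves t) = p - 1
              \<longrightarrow> tree_eval circ t = 0) \<and>
     strongly_nilpotent_index_le circ (mult_set p) (p - 1) \<and>
     (\<forall>t i. length (filter (\<lambda>x. x \<in> mult_set p) (leaves t)) \<ge> i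
              \<longrightarrow> tree_eval circ t \<in> mult_set (p ^ i)) \<and>
     (\<forall>t. length (filter (\<lambda>x. x \<in> mult_set p) (leaves t)) \<ge> p - 1
              \<longrightarrow> tree_eval circ t = 0) \<and>
     mult_set (p ^ (p - 1)) = ({0} :: 'a set)"
proof -
  interpret pbrace2 circ p n
    by unfold_locales (use assms in auto)
  have C4: "\<forall>t i. length (filter (\<lambda>x. x \<in> mult_set p) (leaves t)) \<ge> i
              \<longrightarrow> tree_eval circ t \<in> mult_set (p ^ i)"
    using tree_mult mult_set_mono by blast
  have C5: "\<forall>t. length (filter (\<lambda>x. x \<in> mult_set p) (leaves t)) \<ge> p - 1
              \<longrightarrow> tree_eval circ t = 0"
    using C4 zero_set by blast
  have C2: "\<forall>t. (\<forall>x\<in>set (leaves t). x \<in> mult_set p) \<and> length (leaves t) = p - 1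
              \<longrightarrow> tree_eval circ t = 0"
  proof (intro allI impI)
    fix t :: "'a btree" assume t: "(\<forall>x\<in>set (leaves t). x \<in> mult_set p) \<and> length (leaves t) = p - 1"
    hence "filter (\<lambda>x. x \<in> mult_set p) (leaves t) = leaves t" by simp
    thus "tree_eval circ t = 0" using C5 t by simp
  qed
  have Lp: "a \<in> mult_set p \<Longrightarrow> star circ a x \<in> mult_set p" for a x
    using L[of a 1 x] by simp
  have C1: "sub_brace circ (mult_set p)"
    unfolding sub_brace_def
  proof (intro conjI ballI)
    show "(0::'a) \<in> mult_set p" by (rule mult_set_zero)
    fix a b :: 'a assume a: "a \<in> mult_set p" and b: "b \<in> mult_set p"
    show "a + b \<in> mult_set p" using a b by (rule mult_set_add)
    have "circ a b = star circ a b + a + b" by (simp add: star_def)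
    thus "circ a b \<in> mult_set p" using Lp[OF a, of b] a b by (simp add: mult_set_add)
  next
    fix a :: 'a assume a: "a \<in> mult_set p"
    show "- a \<in> mult_set p" using a by (rule mult_set_neg)
    have "star circ a (cinv a) = - a - cinv a" by (simp add: star_def)
    hence eqc: "cinv a = - a - star circ a (cinv a)" by (simp add: algebra_simps)
    have "- a - star circ a (cinv a) \<in> mult_set p" using mult_set_diff[OF mult_set_neg[OF a] Lp[OF a]] .
    hence "cinv a \<in> mult_set p" using eqc by metis
    moreover have "\<forall>x. circ (circ a (cinv a)) x = x \<and> circ x (circ a (cinv a)) = x" by simp
    ultimately show "\<exists>b\<in>mult_set p. \<forall>x. circ (circ a b) x = x \<and> circ x (circ a b) = x" by blast
  qed
  have C3: "strongly_nilpotent_index_le circ (mult_set p) (p - 1)"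
    unfolding strongly_nilpotent_index_le_def
  proof (intro exI conjI)
    show "1 \<le> p - 1" using assms by auto
    show "p - 1 \<le> p - 1" ..
    show "spow circ (mult_set p) (p - 1) = {0}"
      unfolding spow_def using spow_mult zero_set in_spow.zero by blast
  qed
  show ?thesis using C1 C2 C3 C4 C5 zero_set by blast
qed

end
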